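(* Let $\bar Q$ be a gentle bound quiver with finitely many strings, and define $\pi_\downarrow,\pi^\uparrow:\mathrm{Bicl}(\bar Q)\to\mathrm{Bicl}(\bar Q)$ by $\pi_\downarrow(S)=\{\sigma\in\mathcal S^\pm(\bar Q):\Sigma_{\mathrm{bot}}(\sigma)\subseteq S\}$ and $\pi^\uparrow(S)=\{\sigma\in\mathcal S^\pm(\bar Q):\Sigma_{\mathrm{top}}(\sigma)\cap S\ne\emptyset\}$. Then (i) $\pi_\downarrow(S)\subseteq S\subseteq\pi^\uparrow(S)$ for every $S\in\mathrm{Bicl}(\bar Q)$; (ii) $\pi_\downarrow\circ\pi_\downarrow=\pi_\downarrow\circ\pi^\uparrow=\pi_\downarrow$ and $\pi^\uparrow\circ\pi^\uparrow=\pi^\uparrow\circ\pi_\downarrow=\pi^\uparrow$; (iii) $\pi_\downarrow$ and $\pi^\uparrow$ are order preserving. Consequently the fibers of $\pi^\uparrow$ and $\pi_\downarrow$ coincide, and the relation $S\equiv T\iff\pi_\downarrow(S)=\pi_\downarrow(T)\iff\pi^\uparrow(S)=\pi^\uparrow(T)$ is an order congruence on $\mathrm{Bicl}(\bar Q)$.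
   Context: A gentle bound quiver is $\bar Q=(Q,I)$, $Q$ finite (paths composed left to right), $I$ admissible generated by length-two paths, each vertex with at most two incoming and two outgoing arrows, and for each arrow $\beta$ at most one $\alpha$ with $t(\alpha)=s(\beta),\alpha\beta\notin I$, at most one with $\alpha\beta\in I$, and dually at most one $\gamma$ with $s(\gamma)=t(\beta),\beta\gamma\notin I$ and at most one with $\beta\gamma\in I$. Strings: composable reduced words $\alpha_1^{\epsilon_1}\cdots\alpha_\ell^{\epsilon_\ell}$ in arrows and inverse arrows with no factor $\pi^{\pm1}$ for a path $\pi\in I$, or length-zero $\varepsilon_v$; $\mathcal S^\pm(\bar Q)$ = strings up to inversion. Top/bottom substrings of a string $\sigma=\alpha_1^{\epsilon_1}\cdots\alpha_\ell^{\epsilon_\ell}$: a substring $\alpha_i^{\epsilon_i}\cdots\alpha_j^{\epsilon_j}$ (including length-zero substrings at vertices of $\sigma$) is top if ($i=1$ or $\epsilon_{i-1}=-1$) and ($j=\ell$ or $\epsilon_{j+1}=1$), i.e. at each endpoint $\sigma$ ends or has an arrow pointing away; bottom if at each endpoint $\sigma$ ends or has an arrow pointing towards it. $\Sigma_{\mathrm{top}}(\sigma),\Sigma_{\mathrm{bot}}(\sigma)$ are the sets of undirected strings so obtained (both contain $\sigma$). Closure: $\sigma\circ\tau$ = set of undirected strings obtained by joining an endpoint of $\sigma$ to an endpoint of $\tau$ by one arrow $\gamma^{\pm1}$, $\gamma\in Q_1$; $\overline S$ = union of all $\sigma_1\circ\cdots\circ\sigma_\ell$, $\ell\ge1$, $\sigma_i\in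 S$. Biclosed: $S$ and its complement in $\mathcal S^\pm(\bar Q)$ are closed. $\mathrm{Bicl}(\bar Q)$: biclosed sets ordered by inclusion (a lattice). It is known that $\pi_\downarrow(S),\pi^\uparrow(S)$ are biclosed for biclosed $S$. An order congruence on a poset $P$ is an equivalence relation whose classes are intervals and such that the maps sending an element to the minimum (resp. maximum) of its class are order preserving. *)

theory Defs
  imports Main
begin

text \<open>A bound quiver: vertices, arrows, source and target maps, and the set of
length-two relations (pairs (alpha, beta) with tgt alpha = src beta meaning the
path alpha beta, composed left to right) generating the ideal I.\<close>

record ('v, 'a) bquiver =
  verts :: "'v set"
  arrs  :: "'a set"
  src   :: "'a \<Rightarrow> 'v"
  tgt   :: "'a \<Rightarrow> 'v"
  rels  :: "('a \<times> 'a) set"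

definition qpath :: "('v, 'a) bquiver \<Rightarrow> 'a list \<Rightarrow> bool" where
  "qpath Q p \<longleftrightarrow> p \<noteq> [] \<and> set p \<subseteq> arrs Q \<and>
     (\<forall>i. Suc i < length p \<longrightarrow> tgt Q (p ! i) = src Q (p ! Suc i))"

definition gentle :: "('v, 'a) bquiver \<Rightarrow> bool" where
  "gentle Q \<longleftrightarrow>
     finite (verts Q) \<and> finite (arrs Q) \<and>
     (\<forall>\<alpha>\<in>arrs Q. src Q \<alpha> \<in> verts Q \<and> tgt Q \<alpha> \<in> verts Q) \<and>
     rels Q \<subseteq> {(\<alpha>, \<beta>). \<alpha> \<in> arrs Q \<and> \<beta> \<in> arrs Q \<and> tgt Q \<alpha> = src Q \<beta>} \<and>
     \<comment> \<open>admissibility: all sufficiently long paths lie in I\<close>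
     (\<exists>m. \<forall>p. qpath Q p \<and> length p \<ge> m \<longrightarrow>
          (\<exists>i. Suc i < length p \<and> (p ! i, p ! Suc i) \<in> rels Q)) \<and>
     (\<forall>v\<in>verts Q. card {\<alpha>\<in>arrs Q. tgt Q \<alpha> = v} \<le> 2 \<and> card {\<alpha>\<in>arrs Q. src Q \<alpha> = v} \<le> 2) \<and>
     (\<forall>\<beta>\<in>arrs Q. \<forall>\<alpha>\<in>arrs Q. \<forall>\<alpha>'\<in>arrs Q.
        tgt Q \<alpha> = src Q \<beta> \<and> tgt Q \<alpha>' = src Q \<beta> \<and>
        (\<alpha>, \<beta>) \<notin> rels Q \<and> (\<alpha>', \<beta>) \<notin> rels Q \<longrightarrow> \<alpha> = \<alpha>') \<and>
     (\<forall>\<beta>\<in>arrs Q. \<forall>\<alpha>\<in>arrs Q. \<forall>\<alpha>'\<in>arrs Q.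
        (\<alpha>, \<beta>) \<in> rels Q \<and> (\<alpha>', \<beta>) \<in> rels Q \<longrightarrow> \<alpha> = \<alpha>') \<and>
     (\<forall>\<beta>\<in>arrs Q. \<forall>\<gamma>\<in>arrs Q. \<forall>\<gamma>'\<in>arrs Q.
        src Q \<gamma> = tgt Q \<beta> \<and> src Q \<gamma>' = tgt Q \<beta> \<and>
        (\<beta>, \<gamma>) \<notin> rels Q \<and> (\<beta>, \<gamma>') \<notin> rels Q \<longrightarrow> \<gamma> = \<gamma>') \<and>
     (\<forall>\<beta>\<in>arrs Q. \<forall>\<gamma>\<in>arrs Q. \<forall>\<gamma>'\<in>arrs Q.
        (\<beta>, \<gamma>) \<in> rels Q \<and> (\<beta>, \<gamma>') \<in> rels Q \<longrightarrow> \<gamma> = \<gamma>')"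

text \<open>A letter (alpha, True) is the arrow alpha, (alpha, False) is its inverse.
A (directed) string is a starting vertex together with a word of letters;
the starting vertex is only relevant for length-zero strings.\<close>

type_synonym ('v, 'a) str = "'v \<times> ('a \<times> bool) list"

definition lstart :: "('v, 'a) bquiver \<Rightarrow> 'a \<times> bool \<Rightarrow> 'v" where
  "lstart Q l = (if snd l then src Q (fst l) else tgt Q (fst l))"

definition lend :: "('v, 'a) bquiver \<Rightarrow> 'a \<times> bool \<Rightarrow> 'v" where
  "lend Q l = (if snd l then tgt Q (fst l) else src Q (fst l))"

definition str_end :: "('v, 'a) bquiver \<Rightarrow> ('v, 'a) str \<Rightarrow> 'v" where
  "str_end Q \<sigma> = (if snd \<sigma> = [] then fst \<sigma> else lend Q (last (snd \<sigma>)))"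

definition vertex_at :: "('v, 'a) bquiver \<Rightarrow> ('v, 'a) str \<Rightarrow> nat \<Rightarrow> 'v" where
  "vertex_at Q \<sigma> k = (if k = 0 then fst \<sigma> else lend Q (snd \<sigma> ! (k - 1)))"

definition is_string :: "('v, 'a) bquiver \<Rightarrow> ('v, 'a) str \<Rightarrow> bool" where
  "is_string Q \<sigma> \<longleftrightarrow>
     (let v = fst \<sigma>; w = snd \<sigma> in
       v \<in> verts Q \<and> (\<forall>l\<in>set w. fst l \<in> arrs Q) \<and>
       (w \<noteq> [] \<longrightarrow> v = lstart Q (hd w)) \<and>
       (\<forall>i. Suc i < length w \<longrightarrow>
          lend Q (w ! i) = lstart Q (w ! Suc i) \<and>
          \<comment> \<open>reduced\<close>
          \<not> (fst (w ! i) = fst (w ! Suc i) \<and> snd (w ! i) \<noteq> snd (w ! Suc i)) \<and>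
          \<comment> \<open>no factor alpha beta with alpha beta in I\<close>
          \<not> (snd (w ! i) \<and> snd (w ! Suc i) \<and> (fst (w ! i), fst (w ! Suc i)) \<in> rels Q) \<and>
          \<comment> \<open>no factor beta^-1 alpha^-1 with alpha beta in I\<close>
          \<not> (\<not> snd (w ! i) \<and> \<not> snd (w ! Suc i) \<and> (fst (w ! Suc i), fst (w ! i)) \<in> rels Q)))"

definition str_inv :: "('v, 'a) bquiver \<Rightarrow> ('v, 'a) str \<Rightarrow> ('v, 'a) str" where
  "str_inv Q \<sigma> = (str_end Q \<sigma>, rev (map (\<lambda>(\<alpha>, b). (\<alpha>, \<not> b)) (snd \<sigma>)))"

text \<open>Undirected string: the string together with its inverse.\<close>
definition und :: "('v, 'a) bquiver \<Rightarrow> ('v, 'a) str \<Rightarrow> ('v, 'a) str set" where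
  "und Q \<sigma> = {\<sigma>, str_inv Q \<sigma>}"

definition Spm :: "('v, 'a) bquiver \<Rightarrow> ('v, 'a) str set set" where
  "Spm Q = {und Q \<sigma> | \<sigma>. is_string Q \<sigma>}"

text \<open>Substring between positions a and b (letters a+1..b, 1-indexed).\<close>
definition substr :: "('v, 'a) bquiver \<Rightarrow> ('v, 'a) str \<Rightarrow> nat \<Rightarrow> nat \<Rightarrow> ('v, 'a) str" where
  "substr Q \<sigma> a b = (vertex_at Q \<sigma> a, drop a (take b (snd \<sigma>)))"

definition Sigma_top :: "('v, 'a) bquiver \<Rightarrow> ('v, 'a) str \<Rightarrow> ('v, 'a) str set set" where
  "Sigma_top Q \<sigma> = {und Q (substr Q \<sigma> a b) | a b.
     a \<le> b \<and> b \<le> length (snd \<sigma>) \<and>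
     (a = 0 \<or> \<not> snd (snd \<sigma> ! (a - 1))) \<and>
     (b = length (snd \<sigma>) \<or> snd (snd \<sigma> ! b))}"

definition Sigma_bot :: "('v, 'a) bquiver \<Rightarrow> ('v, 'a) str \<Rightarrow> ('v, 'a) str set set" where
  "Sigma_bot Q \<sigma> = {und Q (substr Q \<sigma> a b) | a b.
     a \<le> b \<and> b \<le> length (snd \<sigma>) \<and>
     (a = 0 \<or> snd (snd \<sigma> ! (a - 1))) \<and>
     (b = length (snd \<sigma>) \<or> \<not> snd (snd \<sigma> ! b))}"

text \<open>sigma \<circ> tau: join an endpoint of sigma to an endpoint of tau by one letter.
Since X and Y contain both orientations, all pairs of endpoints are covered.\<close>
definition str_compose :: "('v, 'a) bquiver \<Rightarrow> ('v, 'a) str set \<Rightarrow> ('v, 'a) str set \<Rightarrow> ('v, 'a) str set set" where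
  "str_compose Q X Y = {und Q (fst \<sigma>, snd \<sigma> @ [l] @ snd \<tau>) | \<sigma> \<tau> l.
      \<sigma> \<in> X \<and> \<tau> \<in> Y \<and> fst l \<in> arrs Q \<and>
      lstart Q l = str_end Q \<sigma> \<and> lend Q l = fst \<tau> \<and>
      is_string Q (fst \<sigma>, snd \<sigma> @ [l] @ snd \<tau>)}"

inductive_set str_closure :: "('v, 'a) bquiver \<Rightarrow> ('v, 'a) str set set \<Rightarrow> ('v, 'a) str set set"
  for Q S where
  base: "X \<in> S \<Longrightarrow> X \<in> str_closure Q S"
| step: "X \<in> str_closure Q S \<Longrightarrow> Y \<in> S \<Longrightarrow> Z \<in> str_compose Q X Y \<Longrightarrow> Z \<in> str_closure Q S"

definition str_closed :: "('v, 'a) bquiver \<Rightarrow> ('v, 'a) str set set \<Rightarrow> bool" where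
  "str_closed Q S \<longleftrightarrow> str_closure Q S = S"

definition biclosed :: "('v, 'a) bquiver \<Rightarrow> ('v, 'a) str set set \<Rightarrow> bool" where
  "biclosed Q S \<longleftrightarrow> S \<subseteq> Spm Q \<and> str_closed Q S \<and> str_closed Q (Spm Q - S)"

definition Bicl :: "('v, 'a) bquiver \<Rightarrow> ('v, 'a) str set set set" where
  "Bicl Q = {S. biclosed Q S}"

definition pi_down :: "('v, 'a) bquiver \<Rightarrow> ('v, 'a) str set set \<Rightarrow> ('v, 'a) str set set" where
  "pi_down Q S = {und Q \<sigma> | \<sigma>. is_string Q \<sigma> \<and> Sigma_bot Q \<sigma> \<subseteq> S}"

definition pi_up :: "('v, 'a) bquiver \<Rightarrow> ('v, 'a) str set set \<Rightarrow> ('v, 'a) str set set" where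
  "pi_up Q S = {und Q \<sigma> | \<sigma>. is_string Q \<sigma> \<and> Sigma_top Q \<sigma> \<inter> S \<noteq> {}}"

definition order_congruence :: "'p set \<Rightarrow> ('p \<Rightarrow> 'p \<Rightarrow> bool) \<Rightarrow> ('p \<times> 'p) set \<Rightarrow> bool" where
  "order_congruence P le E \<longleftrightarrow> equiv P E \<and>
     (\<exists>mn mx. (\<forall>x\<in>P. mn x \<in> P \<and> mx x \<in> P \<and>
                  E `` {x} = {y\<in>P. le (mn x) y \<and> le y (mx x)}) \<and>
              (\<forall>x\<in>P. \<forall>y\<in>P. le x y \<longrightarrow> le (mn x) (mn y) \<and> le (mx x) (mx y)))"

end

theory Submission
  imports Defs
begin

definition adj :: "('v, 'a) bquiver \<Rightarrow> 'a \<times> bool \<Rightarrow> 'a \<times> bool \<Rightarrow> bool" where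
  "adj Q l l' \<longleftrightarrow> lend Q l = lstart Q l' \<and> \<not> (fst l = fst l' \<and> snd l \<noteq> snd l') \<and>
     \<not> (snd l \<and> snd l' \<and> (fst l, fst l') \<in> rels Q) \<and>
     \<not> (\<not> snd l \<and> \<not> snd l' \<and> (fst l', fst l) \<in> rels Q)"

lemma is_string_iff: "is_string Q (v, w) \<longleftrightarrow> v \<in> verts Q \<and> (\<forall>l\<in>set w. fst l \<in> arrs Q) \<and>
   (w \<noteq> [] \<longrightarrow> v = lstart Q (hd w)) \<and> (\<forall>i. Suc i < length w \<longrightarrow> adj Q (w ! i) (w ! Suc i))"
  by (simp add: is_string_def adj_def Let_def)

lemma gentle_verts: "gentle Q \<Longrightarrow> \<alpha> \<in> arrs Q \<Longrightarrow> src Q \<alpha> \<in> verts Q \<and> tgt Q \<alpha> \<in> verts Q"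
  by (simp add: gentle_def)

lemma lend_verts: "gentle Q \<Longrightarrow> fst l \<in> arrs Q \<Longrightarrow> lend Q l \<in> verts Q"
  by (auto simp: lend_def dest: gentle_verts)

lemma va_lstart:
  assumes "is_string Q (v, w)" "k < length w"
  shows "vertex_at Q (v, w) k = lstart Q (w ! k)"
proof (cases k)
  case 0 then show ?thesis using assms by (auto simp: is_string_iff vertex_at_def hd_conv_nth)
next
  case (Suc j)
  then have "adj Q (w ! j) (w ! Suc j)" using assms by (auto simp: is_string_iff)
  then show ?thesis using Suc by (simp add: vertex_at_def adj_def)
qed

lemma va_verts:
  assumes "gentle Q" "is_string Q (v, w)" "k \<le> length w"
  shows "vertex_at Q (v, w) k \<in> verts Q"
proof (cases k)
  case 0 then show ?thesis using assms by (auto simp: is_string_iff vertex_at_def)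
next
  case (Suc j)
  then have "w ! j \<in> set w" using assms by simp
  then have "fst (w ! j) \<in> arrs Q" using assms by (auto simp: is_string_iff)
  then show ?thesis using Suc assms(1) by (simp add: vertex_at_def lend_verts)
qed

lemma substr_string:
  assumes g: "gentle Q" and s: "is_string Q (v, w)" and ab: "a \<le> b" "b \<le> length w"
  shows "is_string Q (substr Q (v, w) a b)"
proof -
  have len: "length (drop a (take b w)) = b - a" using ab by simp
  have nth: "drop a (take b w) ! i = w ! (a + i)" if "i < b - a" for i
    using that ab by simp
  have A: "vertex_at Q (v, w) a \<in> verts Q" using va_verts[OF g s] ab by simp
  have B: "\<forall>l\<in>set (drop a (take b w)). fst l \<in> arrs Q"
      using s by (auto simp: is_string_iff dest: in_set_dropD in_set_takeD)
  have C: "vertex_at Q (v, w) a = lstart Q (hd (drop a (take b w)))" if ne: "drop a (take b w) \<noteq> []"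
  proof -
    have "a < b" using len ne by auto
    then have "hd (drop a (take b w)) = w ! a" using nth[of 0] len ne by (simp add: hd_conv_nth)
    then show ?thesis
      using va_lstart[OF s] \<open>a < b\<close> ab by simp
  qed
  have D: "adj Q (drop a (take b w) ! i) (drop a (take b w) ! Suc i)" if "Suc i < length (drop a (take b w))" for i
  proof -
    have i: "Suc i < b - a" using len that by simp
    have "adj Q (w ! (a + i)) (w ! Suc (a + i))" using s i ab by (auto simp: is_string_iff)
    then show ?thesis
      using nth[of i] nth[of "Suc i"] i by simp
  qed
  show ?thesis unfolding substr_def is_string_iff snd_conv using A B C D by blast
qed

lemma sub_sub:
  assumes "c \<le> d" "d \<le> length w" "a \<le> b" "b \<le> d - c"
  shows "substr Q (substr Q (v, w) c d) a b = substr Q (v, w) (c + a) (c + b)"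
proof -
  have "drop a (take b (drop c (take d w))) = drop (c + a) (take (c + b) w)"
    using assms by (simp add: take_drop drop_drop min_def add.commute)
  moreover have "vertex_at Q (vertex_at Q (v, w) c, drop c (take d w)) a = vertex_at Q (v, w) (c + a)"
    using assms by (auto simp: vertex_at_def)
  ultimately show ?thesis by (simp add: substr_def)
qed

definition gen :: "bool \<Rightarrow> ('v, 'a) str \<Rightarrow> nat \<Rightarrow> nat \<Rightarrow> bool" where
  "gen p x a b \<longleftrightarrow> a \<le> b \<and> b \<le> length (snd x) \<and> (a = 0 \<or> snd (snd x ! (a - 1)) = p) \<and>
     (b = length (snd x) \<or> snd (snd x ! b) \<noteq> p)"

lemma gen_sub:
  assumes "c \<le> d" "d \<le> length w"
  shows "gen p (substr Q (v, w) c d) a b \<longleftrightarrow> (a \<le> b \<and> b \<le> d - c \<and> (a = 0 \<or> snd (w ! (c + a - 1)) = p)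
     \<and> (b = d - c \<or> snd (w ! (c + b)) \<noteq> p))"
  using assms by (auto simp: gen_def substr_def)

lemma inv_snd: "snd (str_inv Q (v, w)) = rev (map (\<lambda>l. (fst l, \<not> snd l)) w)"
  by (simp add: str_inv_def case_prod_beta')

lemma inv_nth: "i < length w \<Longrightarrow> snd (str_inv Q (v, w)) ! i = (fst (w ! (length w - Suc i)), \<not> snd (w ! (length w - Suc i)))"
  by (simp add: inv_snd rev_nth)

lemma inv_len[simp]: "length (snd (str_inv Q x)) = length (snd x)"
  by (simp add: str_inv_def)

lemma lend_flip: "lend Q (\<alpha>, \<not> b) = lstart Q (\<alpha>, b)" "lstart Q (\<alpha>, \<not> b) = lend Q (\<alpha>, b)"
  by (auto simp: lend_def lstart_def)

lemma inv_inv: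
  assumes "is_string Q (v, w)"
  shows "str_inv Q (str_inv Q (v, w)) = (v, w)"
proof -
  have s: "snd (str_inv Q (str_inv Q (v, w))) = w"
    by (simp add: str_inv_def case_prod_beta' rev_map comp_def)
  have f: "fst (str_inv Q (str_inv Q (v, w))) = v"
  proof (cases "w = []")
    case True then show ?thesis by (simp add: str_inv_def str_end_def)
  next
    case False
    have "last (snd (str_inv Q (v, w))) = (fst (hd w), \<not> snd (hd w))"
      using False by (simp add: inv_snd last_rev hd_map)
    moreover have "fst (str_inv Q (str_inv Q (v, w))) = str_end Q (str_inv Q (v, w))"
      by (simp add: str_inv_def)
    moreover have "snd (str_inv Q (v, w)) \<noteq> []" using False by (simp add: inv_snd)
    moreover have "v = lstart Q (hd w)" using False assms by (simp add: is_string_iff)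
    ultimately show ?thesis
      by (simp add: str_end_def lend_flip)
  qed
  show ?thesis using s f by (metis prod.collapse)
qed

lemma und_inv: "is_string Q x \<Longrightarrow> und Q (str_inv Q x) = und Q x"
  by (cases x) (auto simp: und_def inv_inv)

lemma end_sub:
  assumes "a \<le> b" "b \<le> length w"
  shows "str_end Q (substr Q (v, w) a b) = vertex_at Q (v, w) b"
  using assms by (auto simp: str_end_def substr_def vertex_at_def last_conv_nth min_def)

lemma va_inv:
  assumes s: "is_string Q (v, w)" and b: "b \<le> length w"
  shows "vertex_at Q (str_inv Q (v, w)) (length w - b) = vertex_at Q (v, w) b"
proof (cases "b = length w")
  case True then show ?thesis
    by (cases "w = []") (auto simp: vertex_at_def str_inv_def str_end_def last_conv_nth)
next
  case False
  then have "vertex_at Q (str_inv Q (v, w)) (length w - b) = lend Q (snd (str_inv Q (v, w)) ! (length w - b - 1))"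
    using b by (simp add: vertex_at_def)
  also have "\<dots> = lstart Q (w ! b)" using False b
    by (simp add: inv_nth Suc_diff_Suc lend_flip)
  also have "\<dots> = vertex_at Q (v, w) b" using va_lstart[OF s] False b by simp
  finally show ?thesis .
qed

lemma inv_sub:
  assumes s: "is_string Q (v, w)" and ab: "a \<le> b" "b \<le> length w"
  shows "str_inv Q (substr Q (v, w) a b) = substr Q (str_inv Q (v, w)) (length w - b) (length w - a)"
proof -
  have 1: "fst (str_inv Q (substr Q (v, w) a b)) = vertex_at Q (v, w) b"
    using end_sub[OF ab, of Q v] by (simp add: str_inv_def)
  have 2: "fst (substr Q (str_inv Q (v, w)) (length w - b) (length w - a)) = vertex_at Q (v, w) b"
    using va_inv[OF s ab(2)] by (simp add: substr_def)
  have 3: "snd (str_inv Q (substr Q (v, w) a b)) = snd (substr Q (str_inv Q (v, w)) (length w - b) (length w - a))"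
  proof -
    let ?f = "\<lambda>l. (fst l, \<not> snd l)"
    let ?ys = "map ?f w"
    have "take (length w - a) (rev ?ys) = rev (drop a ?ys)" using ab by (simp add: take_rev)
    then have "drop (length w - b) (take (length w - a) (rev ?ys)) = rev (take (b - a) (drop a ?ys))"
      using ab by (simp add: drop_rev)
    also have "take (b - a) (drop a ?ys) = map ?f (drop a (take b w))"
      using ab by (simp add: take_drop drop_map take_map)
    finally show ?thesis by (simp add: substr_def inv_snd str_inv_def[of Q "substr Q (v, w) a b"] case_prod_beta')
  qed
  show ?thesis using 1 2 3 by (metis prod.collapse)
qed


definition SG :: "('v, 'a) bquiver \<Rightarrow> bool \<Rightarrow> ('v, 'a) str \<Rightarrow> ('v, 'a) str set set" where
  "SG Q p x = {und Q (substr Q x a b) | a b. gen p x a b}"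

lemma gen_inv:
  assumes ab: "a \<le> b" "b \<le> length w"
  shows "gen p (str_inv Q (v, w)) (length w - b) (length w - a) \<longleftrightarrow> gen p (v, w) a b"
proof -
  have L: "(length w - b = 0 \<or> snd (snd (str_inv Q (v, w)) ! (length w - b - 1)) = p) \<longleftrightarrow>
        (b = length w \<or> snd (w ! b) \<noteq> p)"
  proof (cases "b = length w")
    case False
    then have "snd (str_inv Q (v, w)) ! (length w - b - 1) = (fst (w ! b), \<not> snd (w ! b))"
      using ab by (simp add: inv_nth Suc_diff_Suc)
    then show ?thesis using False ab by auto
  qed simp
  have R: "(length w - a = length w \<or> snd (snd (str_inv Q (v, w)) ! (length w - a)) \<noteq> p) \<longleftrightarrow>
        (a = 0 \<or> snd (w ! (a - 1)) = p)"
  proof (cases "a = 0")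
    case False
    then have "snd (str_inv Q (v, w)) ! (length w - a) = (fst (w ! (a - 1)), \<not> snd (w ! (a - 1)))"
      using ab by (simp add: inv_nth Suc_diff_Suc)
    then show ?thesis using False ab by auto
  qed simp
  show ?thesis using ab L R unfolding gen_def by auto
qed

lemma SG_inv:
  assumes g: "gentle Q" and s: "is_string Q (v, w)"
  shows "SG Q p (str_inv Q (v, w)) = SG Q p (v, w)"
proof
  show "SG Q p (v, w) \<subseteq> SG Q p (str_inv Q (v, w))"
  proof
    fix X assume "X \<in> SG Q p (v, w)"
    then obtain a b where X: "X = und Q (substr Q (v, w) a b)" and gab: "gen p (v, w) a b"
      by (auto simp: SG_def)
    have ab: "a \<le> b" "b \<le> length w" using gab by (auto simp: gen_def)
    have "X = und Q (str_inv Q (substr Q (v, w) a b))"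
      using X und_inv substr_string[OF g s ab] by metis
    also have "\<dots> = und Q (substr Q (str_inv Q (v, w)) (length w - b) (length w - a))"
      using inv_sub[OF s ab] by simp
    finally show "X \<in> SG Q p (str_inv Q (v, w))"
      using gen_inv[OF ab, of p Q v] gab by (auto simp: SG_def)
  qed
next
  show "SG Q p (str_inv Q (v, w)) \<subseteq> SG Q p (v, w)"
  proof
    fix X assume "X \<in> SG Q p (str_inv Q (v, w))"
    then obtain a' b' where X: "X = und Q (substr Q (str_inv Q (v, w)) a' b')"
        and gab: "gen p (str_inv Q (v, w)) a' b'"
      by (auto simp: SG_def)
    have ab': "a' \<le> b'" "b' \<le> length w" using gab by (auto simp: gen_def)
    define a where "a = length w - b'"
    define b where "b = length w - a'"
    have ab: "a \<le> b" "b \<le> length w" using ab' by (auto simp: a_def b_def)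
    have e: "a' = length w - b" "b' = length w - a" using ab' by (auto simp: a_def b_def)
    have "X = und Q (str_inv Q (substr Q (v, w) a b))"
      using X inv_sub[OF s ab] e by simp
    also have "\<dots> = und Q (substr Q (v, w) a b)"
      using und_inv substr_string[OF g s ab] by metis
    finally show "X \<in> SG Q p (v, w)"
      using gen_inv[OF ab, of p Q v] gab e by (auto simp: SG_def)
  qed
qed

lemma SG_und:
  assumes g: "gentle Q" and s: "is_string Q x" and m: "y \<in> und Q x"
  shows "SG Q p y = SG Q p x"
proof -
  obtain v w where x: "x = (v, w)" by (cases x)
  show ?thesis using m SG_inv[OF g s[unfolded x]] x by (auto simp: und_def)
qed

lemma SG_self: "is_string Q x \<Longrightarrow> und Q x \<in> SG Q p x"
proof -
  assume "is_string Q x"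
  have "substr Q x 0 (length (snd x)) = x" by (simp add: substr_def vertex_at_def)
  moreover have "gen p x 0 (length (snd x))" by (simp add: gen_def)
  ultimately show ?thesis unfolding SG_def by (metis (mono_tags, lifting) mem_Collect_eq)
qed

lemma SG_Spm:
  assumes g: "gentle Q" and s: "is_string Q x"
  shows "SG Q p x \<subseteq> Spm Q"
proof -
  obtain v w where x: "x = (v, w)" by (cases x)
  show ?thesis
  proof
    fix X assume "X \<in> SG Q p x"
    then obtain a b where X: "X = und Q (substr Q x a b)" and gab: "gen p x a b"
      by (auto simp: SG_def)
    have "is_string Q (substr Q x a b)" using substr_string[OF g s[unfolded x]] gab x by (auto simp: gen_def)
    then show "X \<in> Spm Q" using X unfolding Spm_def by blast
  qed
qed

lemma SG_sub_mono:
  assumes "gen p (v, w) a b"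
  shows "SG Q p (substr Q (v, w) a b) \<subseteq> SG Q p (v, w)"
proof
  fix X assume "X \<in> SG Q p (substr Q (v, w) a b)"
  then obtain c d where X: "X = und Q (substr Q (substr Q (v, w) a b) c d)"
      and gcd: "gen p (substr Q (v, w) a b) c d" by (auto simp: SG_def)
  have ab: "a \<le> b" "b \<le> length w" using assms by (auto simp: gen_def)
  have gc: "c \<le> d \<and> d \<le> b - a \<and> (c = 0 \<or> snd (w ! (a + c - 1)) = p) \<and> (d = b - a \<or> snd (w ! (a + d)) \<noteq> p)"
    using gen_sub[OF ab, THEN iffD1, OF gcd] .
  have "X = und Q (substr Q (v, w) (a + c) (a + d))" using X sub_sub[OF ab, of c d Q v] gc by simp
  moreover have "gen p (v, w) (a + c) (a + d)" using assms gc by (auto simp: gen_def)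
  ultimately show "X \<in> SG Q p (v, w)" unfolding SG_def by blast
qed



lemma join:
  assumes g: "gentle Q" and s: "is_string Q (v, w)" and m: "a \<le> m" "Suc m \<le> b" "b \<le> length w"
  shows "und Q (substr Q (v, w) a b) \<in> str_compose Q (und Q (substr Q (v, w) a m)) (und Q (substr Q (v, w) (Suc m) b))"
proof -
  let ?\<sigma> = "substr Q (v, w) a m" and ?\<tau> = "substr Q (v, w) (Suc m) b" and ?l = "w ! m"
  have ml: "m < length w" using m by simp
  have l1: "fst ?l \<in> arrs Q" using s ml by (auto simp: is_string_iff)
  have l2: "lstart Q ?l = str_end Q ?\<sigma>" using end_sub[of a m w Q v] m va_lstart[OF s ml] by simp
  have l3: "lend Q ?l = fst ?\<tau>" by (simp add: substr_def vertex_at_def)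
  have tb: "take b w = take m w @ w ! m # drop (Suc m) (take b w)"
    using id_take_nth_drop[of m "take b w"] m by (simp add: min_def)
  have eq: "(fst ?\<sigma>, snd ?\<sigma> @ [?l] @ snd ?\<tau>) = substr Q (v, w) a b"
  proof -
    have "drop a (take b w) = drop a (take m w) @ w ! m # drop (Suc m) (take b w)"
    proof -
      have "drop a (take b w) = drop a (take m w @ w ! m # drop (Suc m) (take b w))"
        using tb by metis
      also have "\<dots> = drop a (take m w) @ w ! m # drop (Suc m) (take b w)"
        using m by simp
      finally show ?thesis .
    qed
    then show ?thesis by (simp add: substr_def)
  qed
  have st: "is_string Q (fst ?\<sigma>, snd ?\<sigma> @ [?l] @ snd ?\<tau>)"
    using eq substr_string[OF g s, of a b] m by simp
  have "\<exists>\<sigma> \<tau> l. und Q (substr Q (v, w) a b) = und Q (fst \<sigma>, snd \<sigma> @ [l] @ snd \<tau>) \<and>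
      \<sigma> \<in> und Q ?\<sigma> \<and> \<tau> \<in> und Q ?\<tau> \<and> fst l \<in> arrs Q \<and>
      lstart Q l = str_end Q \<sigma> \<and> lend Q l = fst \<tau> \<and>
      is_string Q (fst \<sigma>, snd \<sigma> @ [l] @ snd \<tau>)"
    by (rule exI[of _ ?\<sigma>], rule exI[of _ ?\<tau>], rule exI[of _ ?l]) (use l1 l2 l3 eq st in \<open>simp add: und_def\<close>)
  then show ?thesis unfolding str_compose_def by blast
qed

lemma closure_join:
  assumes g: "gentle Q" and s: "is_string Q (v, w)" and m: "a \<le> m" "Suc m \<le> b" "b \<le> length w"
    and A: "und Q (substr Q (v, w) a m) \<in> str_closure Q S" and B: "und Q (substr Q (v, w) (Suc m) b) \<in> S"
  shows "und Q (substr Q (v, w) a b) \<in> str_closure Q S"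
  using str_closure.step[OF A B join[OF g s m]] .

lemma main:
  assumes g: "gentle Q" and cl: "str_closure Q S \<subseteq> S" and s: "is_string Q (v, w)"
    and H: "\<And>a b. gen p (v, w) a b \<Longrightarrow> (\<exists>a' b'. a \<le> a' \<and> a' \<le> b' \<and> b' \<le> b \<and>
        (a' = a \<or> snd (w ! (a' - 1)) \<noteq> p) \<and> (b' = b \<or> snd (w ! b') = p) \<and>
        und Q (substr Q (v, w) a' b') \<in> S)"
  shows "gen p (v, w) a b \<Longrightarrow> und Q (substr Q (v, w) a b) \<in> S"
proof (induction "b - a" arbitrary: a b rule: less_induct)
  case less
  have IH: "und Q (substr Q (v, w) a2 b2) \<in> S" if "gen p (v, w) a2 b2" "b2 - a2 < b - a" for a2 b2
    using less.hyps that by blast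
  obtain a' b' where ab': "a \<le> a'" "a' \<le> b'" "b' \<le> b" "a' = a \<or> snd (w ! (a' - 1)) \<noteq> p"
      "b' = b \<or> snd (w ! b') = p" "und Q (substr Q (v, w) a' b') \<in> S"
    using H[OF less.prems] by blast
  have gab: "a \<le> b" "b \<le> length w" "a = 0 \<or> snd (w ! (a - 1)) = p" "b = length w \<or> snd (w ! b) \<noteq> p"
    using less.prems by (auto simp: gen_def)
  have L: "und Q (substr Q (v, w) a b') \<in> str_closure Q S"
  proof (cases "a' = a")
    case True then show ?thesis using ab' str_closure.base by metis
  next
    case False
    then have a'1: "a' - 1 < a'" "a \<le> a' - 1" "Suc (a' - 1) = a'" using ab' by auto
    have "gen p (v, w) a (a' - 1)" using gab ab' False a'1 by (auto simp: gen_def)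
    then have "und Q (substr Q (v, w) a (a' - 1)) \<in> S"
      using IH[of a "a' - 1"] ab' a'1 gab by auto
    then have A: "und Q (substr Q (v, w) a (a' - 1)) \<in> str_closure Q S" by (rule str_closure.base)
    have B: "und Q (substr Q (v, w) (Suc (a' - 1)) b') \<in> S" using a'1 ab' by simp
    show ?thesis
      using closure_join[OF g s a'1(2) _ _ A B] a'1 ab' gab by simp
  qed
  show ?case
  proof (cases "b' = b")
    case True then show ?thesis using L cl by auto
  next
    case False
    have "gen p (v, w) (Suc b') b" using gab ab' False by (auto simp: gen_def)
    then have "und Q (substr Q (v, w) (Suc b') b) \<in> S"
      using IH[of "Suc b'" b] ab' False gab by auto
    then show ?thesis
      using closure_join[OF g s _ _ gab(2) L] ab' False cl by auto
  qed
qed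


definition pd :: "('v, 'a) bquiver \<Rightarrow> bool \<Rightarrow> ('v, 'a) str set set \<Rightarrow> ('v, 'a) str set set" where
  "pd Q p S = {und Q \<sigma> | \<sigma>. is_string Q \<sigma> \<and> SG Q p \<sigma> \<subseteq> S}"

definition pu :: "('v, 'a) bquiver \<Rightarrow> bool \<Rightarrow> ('v, 'a) str set set \<Rightarrow> ('v, 'a) str set set" where
  "pu Q p S = {und Q \<sigma> | \<sigma>. is_string Q \<sigma> \<and> SG Q p \<sigma> \<inter> S \<noteq> {}}"

lemma pi_down_pd: "pi_down Q = pd Q True"
proof -
  have "Sigma_bot Q = SG Q True" by (rule ext) (simp add: Sigma_bot_def SG_def gen_def)
  then show ?thesis by (simp add: pi_down_def pd_def fun_eq_iff)
qed

lemma pi_up_pu: "pi_up Q = pu Q False"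
proof -
  have "Sigma_top Q = SG Q False" by (rule ext) (simp add: Sigma_top_def SG_def gen_def)
  then show ?thesis by (simp add: pi_up_def pu_def fun_eq_iff)
qed

lemma Spm_E: "X \<in> Spm Q \<Longrightarrow> (\<And>\<sigma>. is_string Q \<sigma> \<Longrightarrow> X = und Q \<sigma> \<Longrightarrow> P) \<Longrightarrow> P"
  by (auto simp: Spm_def)

lemma und_mem: "und Q \<sigma> = und Q \<sigma>' \<Longrightarrow> \<sigma> \<in> und Q \<sigma>'"
  by (metis insertI1 und_def)

lemma pd_mem:
  assumes g: "gentle Q" and s: "is_string Q \<sigma>"
  shows "und Q \<sigma> \<in> pd Q p S \<longleftrightarrow> SG Q p \<sigma> \<subseteq> S"
proof
  assume "und Q \<sigma> \<in> pd Q p S"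
  then obtain \<sigma>' where e: "und Q \<sigma> = und Q \<sigma>'" and s': "is_string Q \<sigma>'" and c: "SG Q p \<sigma>' \<subseteq> S"
    unfolding pd_def by blast
  have "SG Q p \<sigma> = SG Q p \<sigma>'" using SG_und[OF g s' und_mem[OF e]] .
  then show "SG Q p \<sigma> \<subseteq> S" using c by simp
next
  assume "SG Q p \<sigma> \<subseteq> S"
  then show "und Q \<sigma> \<in> pd Q p S" using s unfolding pd_def by blast
qed

lemma pu_mem:
  assumes g: "gentle Q" and s: "is_string Q \<sigma>"
  shows "und Q \<sigma> \<in> pu Q p S \<longleftrightarrow> SG Q p \<sigma> \<inter> S \<noteq> {}"
proof
  assume "und Q \<sigma> \<in> pu Q p S"
  then obtain \<sigma>' where e: "und Q \<sigma> = und Q \<sigma>'" and s': "is_string Q \<sigma>'" and c: "SG Q p \<sigma>' \<inter> S \<noteq> {}"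
    unfolding pu_def by blast
  have "SG Q p \<sigma> = SG Q p \<sigma>'" using SG_und[OF g s' und_mem[OF e]] .
  then show "SG Q p \<sigma> \<inter> S \<noteq> {}" using c by simp
next
  assume "SG Q p \<sigma> \<inter> S \<noteq> {}"
  then show "und Q \<sigma> \<in> pu Q p S" using s unfolding pu_def by blast
qed

lemma pd_Spm: "pd Q p S \<subseteq> Spm Q" by (auto simp: pd_def Spm_def)
lemma pu_Spm: "pu Q p S \<subseteq> Spm Q" by (auto simp: pu_def Spm_def)

lemma pd_sub: "pd Q p S \<subseteq> S"
  using SG_self by (fastforce simp: pd_def)

lemma pu_sup: "S \<subseteq> Spm Q \<Longrightarrow> S \<subseteq> pu Q p S"
  using SG_self by (fastforce simp: pu_def Spm_def)

lemma pd_mono: "S \<subseteq> T \<Longrightarrow> pd Q p S \<subseteq> pd Q p T" by (fastforce simp: pd_def)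
lemma pu_mono: "S \<subseteq> T \<Longrightarrow> pu Q p S \<subseteq> pu Q p T" by (fastforce simp: pu_def)

lemma pd_idem:
  assumes g: "gentle Q"
  shows "pd Q p (pd Q p S) = pd Q p S"
proof
  show "pd Q p (pd Q p S) \<subseteq> pd Q p S" by (rule pd_sub)
  show "pd Q p S \<subseteq> pd Q p (pd Q p S)"
  proof
    fix X assume "X \<in> pd Q p S"
    then obtain v w where X: "X = und Q (v, w)" and s: "is_string Q (v, w)" and sub: "SG Q p (v, w) \<subseteq> S"
      by (auto simp: pd_def)
    have "SG Q p (v, w) \<subseteq> pd Q p S"
    proof
      fix Y assume "Y \<in> SG Q p (v, w)"
      then obtain a b where Y: "Y = und Q (substr Q (v, w) a b)" and gab: "gen p (v, w) a b"
        by (auto simp: SG_def)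
      have ab: "a \<le> b" "b \<le> length w" using gab by (auto simp: gen_def)
      show "Y \<in> pd Q p S"
        using pd_mem[OF g substr_string[OF g s ab]] SG_sub_mono[OF gab] sub Y by blast
    qed
    then show "X \<in> pd Q p (pd Q p S)" using pd_mem[OF g s] X by blast
  qed
qed

lemma pu_eq:
  assumes g: "gentle Q"
  shows "pu Q p Y = Spm Q - pd Q p (Spm Q - Y)"
proof
  show "pu Q p Y \<subseteq> Spm Q - pd Q p (Spm Q - Y)"
  proof
    fix X assume "X \<in> pu Q p Y"
    then obtain \<sigma> where X: "X = und Q \<sigma>" and s: "is_string Q \<sigma>" and ne: "SG Q p \<sigma> \<inter> Y \<noteq> {}"
      by (auto simp: pu_def)
    show "X \<in> Spm Q - pd Q p (Spm Q - Y)"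
    proof -
      have "X \<in> Spm Q" using X s unfolding Spm_def by blast
      moreover have "X \<notin> pd Q p (Spm Q - Y)" using X ne pd_mem[OF g s] by auto
      ultimately show ?thesis by blast
    qed
  qed
  show "Spm Q - pd Q p (Spm Q - Y) \<subseteq> pu Q p Y"
  proof
    fix X assume X: "X \<in> Spm Q - pd Q p (Spm Q - Y)"
    then obtain \<sigma> where s: "is_string Q \<sigma>" and Xe: "X = und Q \<sigma>" by (auto elim: Spm_E)
    have "\<not> SG Q p \<sigma> \<subseteq> Spm Q - Y" using X Xe pd_mem[OF g s] by auto
    then have "SG Q p \<sigma> \<inter> Y \<noteq> {}" using SG_Spm[OF g s] by auto
    then show "X \<in> pu Q p Y" using pu_mem[OF g s] Xe by auto
  qed
qed

lemma pd_pu: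
  assumes g: "gentle Q" and cl: "str_closure Q S \<subseteq> S" and S: "S \<subseteq> Spm Q" and q: "q = (\<not> p)"
  shows "pd Q p (pu Q q S) = pd Q p S"
proof
  show "pd Q p S \<subseteq> pd Q p (pu Q q S)" using pd_mono pu_sup[OF S] by blast
  show "pd Q p (pu Q q S) \<subseteq> pd Q p S"
  proof
    fix X assume "X \<in> pd Q p (pu Q q S)"
    then obtain v w where X: "X = und Q (v, w)" and s: "is_string Q (v, w)" and sub: "SG Q p (v, w) \<subseteq> pu Q q S"
      by (auto simp: pd_def)
    have H: "\<exists>a' b'. a \<le> a' \<and> a' \<le> b' \<and> b' \<le> b \<and>
        (a' = a \<or> snd (w ! (a' - 1)) \<noteq> p) \<and> (b' = b \<or> snd (w ! b') = p) \<and>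
        und Q (substr Q (v, w) a' b') \<in> S" if gab: "gen p (v, w) a b" for a b
    proof -
      have ab: "a \<le> b" "b \<le> length w" using gab by (auto simp: gen_def)
      have "und Q (substr Q (v, w) a b) \<in> pu Q q S" using sub gab by (auto simp: SG_def)
      then have "SG Q q (substr Q (v, w) a b) \<inter> S \<noteq> {}"
        using pu_mem[OF g substr_string[OF g s ab]] by blast
      then obtain c d where cd: "gen q (substr Q (v, w) a b) c d" and inS: "und Q (substr Q (substr Q (v, w) a b) c d) \<in> S"
        by (auto simp: SG_def)
      have gc: "c \<le> d \<and> d \<le> b - a \<and> (c = 0 \<or> snd (w ! (a + c - 1)) = q) \<and> (d = b - a \<or> snd (w ! (a + d)) \<noteq> q)"
        using gen_sub[OF ab, THEN iffD1, OF cd] .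
      have "und Q (substr Q (v, w) (a + c) (a + d)) \<in> S" using inS sub_sub[OF ab, of c d Q v] gc by simp
      then show ?thesis using gc q ab by (intro exI[of _ "a + c"] exI[of _ "a + d"]) auto
    qed
    have "SG Q p (v, w) \<subseteq> S"
    proof
      fix Y assume "Y \<in> SG Q p (v, w)"
      then obtain a b where Y: "Y = und Q (substr Q (v, w) a b)" and gab: "gen p (v, w) a b"
        by (auto simp: SG_def)
      show "Y \<in> S" using main[OF g cl s H gab] Y by blast
    qed
    then show "X \<in> pd Q p S" using pd_mem[OF g s] X by blast
  qed
qed


lemma in_SG_sub:
  assumes "c \<le> d" "d \<le> length w" "c \<le> a" "a \<le> b" "b \<le> d"
    "a = c \<or> snd (w ! (a - 1)) = p" "b = d \<or> snd (w ! b) \<noteq> p"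
  shows "und Q (substr Q (v, w) a b) \<in> SG Q p (substr Q (v, w) c d)"
proof -
  have e: "substr Q (substr Q (v, w) c d) (a - c) (b - c) = substr Q (v, w) a b"
    using sub_sub[OF assms(1,2), of "a - c" "b - c" Q v] assms by simp
  have "gen p (substr Q (v, w) c d) (a - c) (b - c)"
    using gen_sub[OF assms(1,2), of p Q v "a - c" "b - c"] assms by auto
  then show ?thesis using e unfolding SG_def by (metis (mono_tags, lifting) mem_Collect_eq)
qed

lemma gen_lift:
  assumes "c \<le> d" "d \<le> length w" "gen p (substr Q (v, w) c d) a b"
    "a = 0 \<Longrightarrow> c = 0 \<or> snd (w ! (c - 1)) = p" "b = d - c \<Longrightarrow> d = length w \<or> snd (w ! d) \<noteq> p"
  shows "gen p (v, w) (c + a) (c + b) \<and> substr Q (substr Q (v, w) c d) a b = substr Q (v, w) (c + a) (c + b)"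
proof -
  have gc: "a \<le> b \<and> b \<le> d - c \<and> (a = 0 \<or> snd (w ! (c + a - 1)) = p) \<and> (b = d - c \<or> snd (w ! (c + b)) \<noteq> p)"
    using gen_sub[OF assms(1,2), THEN iffD1, OF assms(3)] .
  have "gen p (v, w) (c + a) (c + b)" using gc assms by (auto simp: gen_def)
  then show ?thesis using sub_sub[OF assms(1,2), of a b Q v] gc by simp
qed

lemma decomp:
  assumes "z = (fst \<sigma>, snd \<sigma> @ [l] @ snd \<tau>)" "lend Q l = fst \<tau>"
  shows "substr Q z 0 (length (snd \<sigma>)) = \<sigma>" "substr Q z (Suc (length (snd \<sigma>))) (length (snd z)) = \<tau>"
    "snd z ! length (snd \<sigma>) = l" "length (snd z) = Suc (length (snd \<sigma>) + length (snd \<tau>))"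
  using assms by (auto simp: substr_def vertex_at_def nth_append)

lemma compose_E:
  assumes "Z \<in> str_compose Q X Y"
  obtains \<sigma> \<tau> l where "Z = und Q (fst \<sigma>, snd \<sigma> @ [l] @ snd \<tau>)" "\<sigma> \<in> X" "\<tau> \<in> Y"
    "lend Q l = fst \<tau>" "is_string Q (fst \<sigma>, snd \<sigma> @ [l] @ snd \<tau>)"
  using assms unfolding str_compose_def by blast

lemma SG_of_member:
  assumes g: "gentle Q" and X: "X \<in> Spm Q" and m: "\<sigma> \<in> X"
  shows "und Q \<sigma> = X \<and> (X \<in> pd Q p S \<longleftrightarrow> SG Q p \<sigma> \<subseteq> S)"
proof -
  obtain \<sigma>0 where s0: "is_string Q \<sigma>0" and X0: "X = und Q \<sigma>0" using X by (auto elim: Spm_E)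
  have "und Q \<sigma> = X" using m X0 und_inv[OF s0] by (auto simp: und_def)
  moreover have "SG Q p \<sigma> = SG Q p \<sigma>0" using SG_und[OF g s0] m X0 by blast
  ultimately show ?thesis using pd_mem[OF g s0] X0 by auto
qed

lemma closed_pd:
  assumes g: "gentle Q" and cl: "str_closure Q S \<subseteq> S"
  shows "str_closure Q (pd Q p S) \<subseteq> pd Q p S"
proof
  fix Z assume "Z \<in> str_closure Q (pd Q p S)"
  then show "Z \<in> pd Q p S"
  proof (induction rule: str_closure.induct)
    case (base X) then show ?case .
  next
    case (step X Y Z)
    obtain \<sigma> \<tau> l where Z: "Z = und Q (fst \<sigma>, snd \<sigma> @ [l] @ snd \<tau>)" and m: "\<sigma> \<in> X" "\<tau> \<in> Y"
      and le: "lend Q l = fst \<tau>" and st: "is_string Q (fst \<sigma>, snd \<sigma> @ [l] @ snd \<tau>)"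
      using step.hyps(3) by (rule compose_E)
    define z where "z = (fst \<sigma>, snd \<sigma> @ [l] @ snd \<tau>)"
    obtain v w where vw: "z = (v, w)" by (cases z)
    define m where "m = length (snd \<sigma>)"
    have dz: "substr Q (v, w) 0 m = \<sigma>" "substr Q (v, w) (Suc m) (length w) = \<tau>"
      "w ! m = l" "length w = Suc (m + length (snd \<tau>))"
      using decomp[OF z_def le] vw by (auto simp: m_def)
    have s: "is_string Q (v, w)" using st z_def vw by simp
    have SX: "SG Q p \<sigma> \<subseteq> S" using SG_of_member[OF g _ m(1)] step.IH pd_Spm by blast
    have SY: "SG Q p \<tau> \<subseteq> S" using SG_of_member[OF g _ m(2)] step.hyps(2) pd_Spm by blast
    have "SG Q p (v, w) \<subseteq> S"
    proof
      fix W assume "W \<in> SG Q p (v, w)"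
      then obtain a b where W: "W = und Q (substr Q (v, w) a b)" and gab: "gen p (v, w) a b"
        by (auto simp: SG_def)
      have gg: "a \<le> b" "b \<le> length w" "a = 0 \<or> snd (w ! (a - 1)) = p" "b = length w \<or> snd (w ! b) \<noteq> p"
        using gab by (auto simp: gen_def)
      show "W \<in> S"
      proof (cases "b \<le> m")
        case True
        then show ?thesis using in_SG_sub[of 0 m w a b p Q v] gg dz SX W by auto
      next
        case False
        note F = False
        show ?thesis
        proof (cases "Suc m \<le> a")
          case True
          then show ?thesis using in_SG_sub[of "Suc m" "length w" w a b p Q v] gg dz SY W by auto
        next
          case False
          have A: "und Q (substr Q (v, w) a m) \<in> S"
            using in_SG_sub[of 0 m w a m p Q v] gg dz SX False F by auto
          have B: "und Q (substr Q (v, w) (Suc m) b) \<in> S"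
            using in_SG_sub[of "Suc m" "length w" w "Suc m" b p Q v] gg dz SY False F by auto
          have "W \<in> str_closure Q S"
            using closure_join[OF g s _ _ gg(2) str_closure.base[OF A] B] False F W by auto
          then show ?thesis using cl by auto
        qed
      qed
    qed
    then show ?case using pd_mem[OF g s] Z z_def vw by simp
  qed
qed

lemma coclosed_pd:
  assumes g: "gentle Q"
  shows "str_closure Q (Spm Q - pd Q p S) \<subseteq> Spm Q - pd Q p S"
proof
  fix Z assume "Z \<in> str_closure Q (Spm Q - pd Q p S)"
  then show "Z \<in> Spm Q - pd Q p S"
  proof (induction rule: str_closure.induct)
    case (base X) then show ?case .
  next
    case (step X Y Z)
    obtain \<sigma> \<tau> l where Z: "Z = und Q (fst \<sigma>, snd \<sigma> @ [l] @ snd \<tau>)" and m: "\<sigma> \<in> X" "\<tau> \<in> Y"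
      and le: "lend Q l = fst \<tau>" and st: "is_string Q (fst \<sigma>, snd \<sigma> @ [l] @ snd \<tau>)"
      using step.hyps(3) by (rule compose_E)
    define z where "z = (fst \<sigma>, snd \<sigma> @ [l] @ snd \<tau>)"
    obtain v w where vw: "z = (v, w)" by (cases z)
    define m where "m = length (snd \<sigma>)"
    have dz: "substr Q (v, w) 0 m = \<sigma>" "substr Q (v, w) (Suc m) (length w) = \<tau>"
      "w ! m = l" "length w = Suc (m + length (snd \<tau>))"
      using decomp[OF z_def le] vw by (auto simp: m_def)
    have s: "is_string Q (v, w)" using st z_def vw by simp
    have ZS: "Z \<in> Spm Q" using s Z z_def vw by (auto simp: Spm_def)
    have SX: "\<not> SG Q p \<sigma> \<subseteq> S" using SG_of_member[OF g _ m(1)] step.IH by blast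
    have SY: "\<not> SG Q p \<tau> \<subseteq> S" using SG_of_member[OF g _ m(2)] step.hyps(2) by blast
    have "\<not> SG Q p (v, w) \<subseteq> S"
    proof (cases "snd l = p")
      case False
      obtain c d where cd: "gen p (substr Q (v, w) 0 m) c d" and nS: "und Q (substr Q (substr Q (v, w) 0 m) c d) \<notin> S"
        using SX dz by (auto simp: SG_def)
      have "gen p (v, w) (0 + c) (0 + d) \<and> substr Q (substr Q (v, w) 0 m) c d = substr Q (v, w) (0 + c) (0 + d)"
        by (rule gen_lift) (use cd dz False in auto)
      then show ?thesis using nS by (auto simp: SG_def)
    next
      case True
      obtain c d where cd: "gen p (substr Q (v, w) (Suc m) (length w)) c d"
          and nS: "und Q (substr Q (substr Q (v, w) (Suc m) (length w)) c d) \<notin> S"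
        using SY dz by (auto simp: SG_def)
      have "gen p (v, w) (Suc m + c) (Suc m + d) \<and> substr Q (substr Q (v, w) (Suc m) (length w)) c d = substr Q (v, w) (Suc m + c) (Suc m + d)"
        by (rule gen_lift) (use cd dz True in auto)
      then show ?thesis using nS by (auto simp: SG_def)
    qed
    then show ?case using pd_mem[OF g s] Z z_def vw ZS by simp
  qed
qed

lemma biclosed_pd:
  assumes g: "gentle Q" and b: "biclosed Q S"
  shows "biclosed Q (pd Q p S)"
proof -
  have cl: "str_closure Q S \<subseteq> S" using b by (simp add: biclosed_def str_closed_def)
  show ?thesis unfolding biclosed_def str_closed_def
    using closed_pd[OF g cl, of p] coclosed_pd[OF g, of p S] pd_Spm
      str_closure.base[of _ "pd Q p S" Q] str_closure.base[of _ "Spm Q - pd Q p S" Q]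
    by blast
qed

lemma biclosed_compl: "biclosed Q S \<Longrightarrow> biclosed Q (Spm Q - S)"
  by (auto simp: biclosed_def Diff_Diff_Int Int_absorb1 Int_absorb2)

lemma biclosed_pu:
  assumes g: "gentle Q" and b: "biclosed Q S"
  shows "biclosed Q (pu Q p S)"
  using biclosed_compl[OF biclosed_pd[OF g biclosed_compl[OF b]]] pu_eq[OF g] by metis


lemma pu_idem:
  assumes g: "gentle Q"
  shows "pu Q p (pu Q p S) = pu Q p S"
proof -
  have "Spm Q - pu Q p S = pd Q p (Spm Q - S)" using pu_eq[OF g, of p S] pd_Spm by blast
  then show ?thesis using pu_eq[OF g, of p "pu Q p S"] pu_eq[OF g, of p S] pd_idem[OF g] by simp
qed

lemma bicl_facts:
  assumes "biclosed Q S"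
  shows "str_closure Q S \<subseteq> S" "S \<subseteq> Spm Q" "str_closure Q (Spm Q - S) \<subseteq> Spm Q - S"
  using assms by (auto simp: biclosed_def str_closed_def)

lemma pu_pd:
  assumes g: "gentle Q" and b: "biclosed Q S" and pq: "p = (\<not> q)"
  shows "pu Q q (pd Q p S) = pu Q q S"
proof -
  note bf = bicl_facts[OF b]
  have "Spm Q - (Spm Q - S) = S" using bf(2) by blast
  then have 1: "Spm Q - pd Q p S = pu Q p (Spm Q - S)" using pu_eq[OF g, of p "Spm Q - S"] by simp
  have 2: "pd Q q (pu Q p (Spm Q - S)) = pd Q q (Spm Q - S)"
    using pd_pu[OF g bf(3) _ ] pq by auto
  show ?thesis using pu_eq[OF g, of q "pd Q p S"] pu_eq[OF g, of q S] 1 2 by simp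
qed

theorem proposition8p5:
  fixes Q :: "('v, 'a) bquiver"
  assumes "gentle Q"
    and "finite {\<sigma>. is_string Q \<sigma>}"
  shows "(\<forall>S\<in>Bicl Q. pi_down Q S \<subseteq> S \<and> S \<subseteq> pi_up Q S)
   \<and> (\<forall>S\<in>Bicl Q. pi_down Q (pi_down Q S) = pi_down Q S \<and> pi_down Q (pi_up Q S) = pi_down Q S
        \<and> pi_up Q (pi_up Q S) = pi_up Q S \<and> pi_up Q (pi_down Q S) = pi_up Q S)
   \<and> (\<forall>S\<in>Bicl Q. \<forall>T\<in>Bicl Q. S \<subseteq> T \<longrightarrow> pi_down Q S \<subseteq> pi_down Q T \<and> pi_up Q S \<subseteq> pi_up Q T)
   \<and> (\<forall>S\<in>Bicl Q. \<forall>T\<in>Bicl Q. pi_down Q S = pi_down Q T \<longleftrightarrow> pi_up Q S = pi_up Q T)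
   \<and> order_congruence (Bicl Q) (\<subseteq>)
       {(S, T). S \<in> Bicl Q \<and> T \<in> Bicl Q \<and> pi_down Q S = pi_down Q T}"
proof -
  note g = assms(1)
  have P1: "pi_down Q S \<subseteq> S \<and> S \<subseteq> pi_up Q S" if "S \<in> Bicl Q" for S
  proof -
    have "S \<subseteq> Spm Q" using that bicl_facts(2) by (auto simp: Bicl_def)
    then show ?thesis using pd_sub pu_sup[of S Q False] by (simp add: pi_down_pd pi_up_pu)
  qed
  have P2: "pi_down Q (pi_down Q S) = pi_down Q S \<and> pi_down Q (pi_up Q S) = pi_down Q S
        \<and> pi_up Q (pi_up Q S) = pi_up Q S \<and> pi_up Q (pi_down Q S) = pi_up Q S" if "S \<in> Bicl Q" for S
  proof -
    have b: "biclosed Q S" using that by (simp add: Bicl_def)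
    note bf = bicl_facts[OF b]
    show ?thesis unfolding pi_down_pd pi_up_pu
      using pd_idem[OF g] pd_pu[OF g bf(1) bf(2), of False True] pu_idem[OF g] pu_pd[OF g b, of True False] by simp
  qed
  have P3: "pi_down Q S \<subseteq> pi_down Q T \<and> pi_up Q S \<subseteq> pi_up Q T" if "S \<subseteq> T" for S T
    using pd_mono[OF that] pu_mono[OF that] by (simp add: pi_down_pd pi_up_pu)
  have P4: "pi_down Q S = pi_down Q T \<longleftrightarrow> pi_up Q S = pi_up Q T" if "S \<in> Bicl Q" "T \<in> Bicl Q" for S T
    using P2[OF that(1)] P2[OF that(2)] by metis
  have BD: "pi_down Q S \<in> Bicl Q" "pi_up Q S \<in> Bicl Q" if "S \<in> Bicl Q" for S
    using that biclosed_pd[OF g] biclosed_pu[OF g] by (auto simp: Bicl_def pi_down_pd pi_up_pu)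
  let ?E = "{(S, T). S \<in> Bicl Q \<and> T \<in> Bicl Q \<and> pi_down Q S = pi_down Q T}"
  have eq: "equiv (Bicl Q) ?E"
    by (rule equivI) (auto simp: refl_on_def sym_def trans_def)
  have cls: "?E `` {S} = {T \<in> Bicl Q. pi_down Q S \<subseteq> T \<and> T \<subseteq> pi_up Q S}" if S: "S \<in> Bicl Q" for S
  proof
    show "?E `` {S} \<subseteq> {T \<in> Bicl Q. pi_down Q S \<subseteq> T \<and> T \<subseteq> pi_up Q S}"
    proof
      fix T assume "T \<in> ?E `` {S}"
      then have T: "T \<in> Bicl Q" "pi_down Q S = pi_down Q T" by auto
      then have "pi_up Q S = pi_up Q T" using P4 S by blast
      then show "T \<in> {T \<in> Bicl Q. pi_down Q S \<subseteq> T \<and> T \<subseteq> pi_up Q S}" using T P1[OF T(1)] by auto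
    qed
    show "{T \<in> Bicl Q. pi_down Q S \<subseteq> T \<and> T \<subseteq> pi_up Q S} \<subseteq> ?E `` {S}"
    proof
      fix T assume "T \<in> {T \<in> Bicl Q. pi_down Q S \<subseteq> T \<and> T \<subseteq> pi_up Q S}"
      then have T: "T \<in> Bicl Q" "pi_down Q S \<subseteq> T" "T \<subseteq> pi_up Q S" by auto
      have "pi_down Q S \<subseteq> pi_down Q T" using P3[OF T(2)] P2[OF S] by simp
      moreover have "pi_down Q T \<subseteq> pi_down Q S" using P3[OF T(3)] P2[OF S] by simp
      ultimately show "T \<in> ?E `` {S}" using S T by auto
    qed
  qed
  have OC: "order_congruence (Bicl Q) (\<subseteq>) ?E"
    unfolding order_congruence_def
    apply (rule conjI[OF eq])
    apply (rule exI[of _ "pi_down Q"], rule exI[of _ "pi_up Q"])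
    apply (intro conjI ballI impI)
        apply (erule BD(1))
       apply (erule BD(2))
      apply (erule cls)
     apply (erule P3[THEN conjunct1])
    apply (erule P3[THEN conjunct2])
    done
  have P1': "\<forall>S\<in>Bicl Q. pi_down Q S \<subseteq> S \<and> S \<subseteq> pi_up Q S" using P1 by blast
  have P2': "\<forall>S\<in>Bicl Q. pi_down Q (pi_down Q S) = pi_down Q S \<and> pi_down Q (pi_up Q S) = pi_down Q S
        \<and> pi_up Q (pi_up Q S) = pi_up Q S \<and> pi_up Q (pi_down Q S) = pi_up Q S" using P2 by blast
  have P3': "\<forall>S\<in>Bicl Q. \<forall>T\<in>Bicl Q. S \<subseteq> T \<longrightarrow> pi_down Q S \<subseteq> pi_down Q T \<and> pi_up Q S \<subseteq> pi_up Q T"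
    using P3 by blast
  have P4': "\<forall>S\<in>Bicl Q. \<forall>T\<in>Bicl Q. pi_down Q S = pi_down Q T \<longleftrightarrow> pi_up Q S = pi_up Q T"
    using P4 by blast
  show ?thesis by (rule conjI[OF P1' conjI[OF P2' conjI[OF P3' conjI[OF P4' OC]]]])
qed

end
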